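(* Let $(M,\Sigma)$ be a measurable space, let $r\ge 1$, and let $\psi_1,\dots,\psi_r\colon\Sigma\to\mathbb{R}$ be non-atomic countably additive charges. Then there exists (and can be obtained by an explicit construction) a strong solution to the fair division problem for $\psi_1,\dots,\psi_r$, i.e. a partition $M=F_1\sqcup\dots\sqcup F_r$ into measurable sets with $\psi_i(F_i)\ge\psi_i(F_j)$ for all $i,j\in\{1,\dots,r\}$.
   Context: A charge is a countably additive real-valued (hence finite) signed measure $\psi\colon\Sigma\to\mathbb{R}$. By the Hahn–Jordan decomposition there is a measurable partition $M=A^+\sqcup A^-$ with $\psi(a)\ge0$ for measurable $a\subseteq A^+$ and $\psi(b)\le 0$ for measurable $b\subseteq A^-$, so $\psi=\mu^+-\mu^-$ where $\mu^\pm$ are the (nonnegative) measures $\mu^+(E)=\psi(E\cap A^+)$, $\mu^-(E)=-\psi(E\cap A^-)$. The charge $\psi$ is called non-atomic if both $\mu^+$ and $\mu^-$ are non-atomic measures. Partition elements are allowed to be empty. *)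

theory Defs
  imports "HOL-Analysis.Analysis"
begin

definition is_charge :: "'a measure \<Rightarrow> ('a set \<Rightarrow> real) \<Rightarrow> bool" where
  "is_charge M \<psi> \<longleftrightarrow>
     (\<forall>A :: nat \<Rightarrow> 'a set. range A \<subseteq> sets M \<longrightarrow> disjoint_family A \<longrightarrow>
        (\<lambda>n. \<psi> (A n)) sums \<psi> (\<Union>n. A n))"

definition is_atom :: "'a measure \<Rightarrow> ('a set \<Rightarrow> real) \<Rightarrow> 'a set \<Rightarrow> bool" where
  "is_atom M \<mu> A \<longleftrightarrow> A \<in> sets M \<and> \<mu> A > 0 \<and>
     (\<forall>B\<in>sets M. B \<subseteq> A \<longrightarrow> \<mu> B = 0 \<or> \<mu> B = \<mu> A)"

definition nonatomic_measure :: "'a measure \<Rightarrow> ('a set \<Rightarrow> real) \<Rightarrow> bool" where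
  "nonatomic_measure M \<mu> \<longleftrightarrow> (\<nexists>A. is_atom M \<mu> A)"

definition hahn_decomposition :: "'a measure \<Rightarrow> ('a set \<Rightarrow> real) \<Rightarrow> 'a set \<Rightarrow> bool" where
  "hahn_decomposition M \<psi> P \<longleftrightarrow> P \<in> sets M \<and>
     (\<forall>a\<in>sets M. a \<subseteq> P \<longrightarrow> \<psi> a \<ge> 0) \<and>
     (\<forall>b\<in>sets M. b \<subseteq> space M - P \<longrightarrow> \<psi> b \<le> 0)"

text \<open>A charge is non-atomic if both Jordan parts mu+ (E) = psi(E \<inter> P),
  mu- (E) = - psi(E - P) (for a Hahn decomposition P) are non-atomic measures.\<close>
definition nonatomic_charge :: "'a measure \<Rightarrow> ('a set \<Rightarrow> real) \<Rightarrow> bool" where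
  "nonatomic_charge M \<psi> \<longleftrightarrow> (\<exists>P. hahn_decomposition M \<psi> P \<and>
     nonatomic_measure M (\<lambda>E. \<psi> (E \<inter> P)) \<and>
     nonatomic_measure M (\<lambda>E. - \<psi> (E \<inter> (space M - P))))"

end

theory Submission
  imports Defs
begin


lemma charge_empty: assumes "is_charge M f" shows "f {} = 0"
proof -
  have "(\<lambda>n. f {}) sums f {}"
    using assms unfolding is_charge_def by (auto dest!: spec[of _ "\<lambda>n. {}"] simp: disjoint_family_on_def)
  hence "(\<lambda>n. f {}) \<longlonglongrightarrow> 0" using summable_LIMSEQ_zero sums_summable by blast
  thus ?thesis by (simp add: LIMSEQ_const_iff)
qed

lemma charge_measure:
  assumes ch: "is_charge M f" and nn: "\<forall>A\<in>sets M. 0 \<le> f A"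
  defines "N \<equiv> measure_of (space M) (sets M) (\<lambda>A. ennreal (f A))"
  shows "sets N = sets M" "space N = space M" "finite_measure N" "\<forall>A\<in>sets M. measure N A = f A"
proof -
  have sa: "sigma_algebra (space M) (sets M)" by (simp add: sets.sigma_algebra_axioms)
  have pos: "positive (sets M) (\<lambda>A. ennreal (f A))"
    unfolding positive_def using charge_empty[OF ch] by simp
  have ca: "countably_additive (sets M) (\<lambda>A. ennreal (f A))"
    unfolding countably_additive_def
  proof (intro allI impI)
    fix A :: "nat \<Rightarrow> 'a set" assume A: "range A \<subseteq> sets M" "disjoint_family A" "\<Union> (range A) \<in> sets M"
    have "(\<lambda>n. f (A n)) sums f (\<Union>n. A n)" using ch A unfolding is_charge_def by blast
    hence "(\<lambda>n. ennreal (f (A n))) sums ennreal (f (\<Union>n. A n))"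
      using nn A by (subst sums_ennreal) auto
    thus "(\<Sum>i. ennreal (f (A i))) = ennreal (f (\<Union> (range A)))" by (simp add: sums_iff)
  qed
  have em: "\<And>A. A \<in> sets M \<Longrightarrow> emeasure N A = ennreal (f A)"
    unfolding N_def by (rule emeasure_measure_of_sigma[OF sa pos ca])
  show sN: "sets N = sets M" unfolding N_def by simp
  show spN: "space N = space M" unfolding N_def by simp
  show "finite_measure N" by (rule finite_measureI) (simp add: spN em)
  show "\<forall>A\<in>sets M. measure N A = f A" using em nn by (simp add: measure_def)
qed



definition natom :: "'a measure \<Rightarrow> bool" where
  "natom \<mu> \<longleftrightarrow> (\<forall>A\<in>sets \<mu>. measure \<mu> A > 0 \<longrightarrow>
     (\<exists>B\<in>sets \<mu>. B \<subseteq> A \<and> 0 < measure \<mu> B \<and> measure \<mu> B < measure \<mu> A))"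

lemma natom_small_pow:
  assumes fm: "finite_measure \<mu>" and na: "natom \<mu>" and A: "A \<in> sets \<mu>" "measure \<mu> A > 0"
  shows "\<exists>B\<in>sets \<mu>. B \<subseteq> A \<and> 0 < measure \<mu> B \<and> measure \<mu> B \<le> measure \<mu> A / 2^n"
proof (induction n)
  case 0 then show ?case using A by auto
next
  case (Suc n)
  interpret finite_measure \<mu> by fact
  from Suc obtain B where B: "B \<in> sets \<mu>" "B \<subseteq> A" "0 < measure \<mu> B" "measure \<mu> B \<le> measure \<mu> A / 2^n" by blast
  from na B obtain C where C: "C \<in> sets \<mu>" "C \<subseteq> B" "0 < measure \<mu> C" "measure \<mu> C < measure \<mu> B"
    unfolding natom_def by blast
  have D: "measure \<mu> (B - C) = measure \<mu> B - measure \<mu> C" using finite_measure_Diff B C by blast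
  have h1: "measure \<mu> A / 2 ^ Suc n = (measure \<mu> A / 2^n) / 2" by simp
  have h: "measure \<mu> B / 2 \<le> measure \<mu> A / 2 ^ Suc n" unfolding h1 using divide_right_mono[OF B(4), of 2] by simp
  show ?case
  proof (cases "measure \<mu> C \<le> measure \<mu> B / 2")
    case True then show ?thesis using C B h by (intro bexI[of _ C]) auto
  next
    case False
    have "B - C \<in> sets \<mu>" using B C by auto
    moreover have "measure \<mu> (B - C) \<le> measure \<mu> B / 2" using False D by linarith
    moreover have "0 < measure \<mu> (B - C)" using D C by linarith
    ultimately show ?thesis using B h by (intro bexI[of _ "B - C"]) auto
  qed
qed

lemma natom_small:
  assumes fm: "finite_measure \<mu>" and na: "natom \<mu>" and A: "A \<in> sets \<mu>" "measure \<mu> A > 0" and e: "e > 0"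
  shows "\<exists>B\<in>sets \<mu>. B \<subseteq> A \<and> 0 < measure \<mu> B \<and> measure \<mu> B < e"
proof -
  obtain n where n: "measure \<mu> A / e < 2^n"
    using real_arch_pow[of 2 "measure \<mu> A / e"] by auto
  hence "measure \<mu> A < e * 2^n" using e by (simp add: divide_less_eq mult.commute)
  hence lt: "measure \<mu> A / 2^n < e" by (simp add: divide_less_eq)
  obtain B where "B\<in>sets \<mu>" "B \<subseteq> A" "0 < measure \<mu> B" "measure \<mu> B \<le> measure \<mu> A / 2^n"
    using natom_small_pow[OF assms(1-4), of n] by blast
  thus ?thesis using lt by (intro bexI[of _ B]) auto
qed

lemma sierpinski:
  assumes fm: "finite_measure \<mu>" and na: "natom \<mu>" and A: "A \<in> sets \<mu>"
    and s: "0 \<le> s" "s \<le> measure \<mu> A"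
  shows "\<exists>B\<in>sets \<mu>. B \<subseteq> A \<and> measure \<mu> B = s"
proof -
  interpret finite_measure \<mu> by fact
  define adm where "adm B C \<longleftrightarrow> C \<in> sets \<mu> \<and> C \<subseteq> A - B \<and> measure \<mu> B + measure \<mu> C \<le> s" for B C
  define \<sigma> where "\<sigma> B = Sup (measure \<mu> ` {C. adm B C})" for B
  have bdd: "bdd_above (measure \<mu> ` {C. adm B C})" for B
  proof (rule bdd_aboveI)
    fix x assume "x \<in> measure \<mu> ` {C. adm B C}"
    then obtain C where C: "adm B C" "x = measure \<mu> C" by auto
    hence "C \<subseteq> A" unfolding adm_def by auto
    thus "x \<le> measure \<mu> A" using C(2) finite_measure_mono[OF _ A] by auto
  qed
  have choose: "\<exists>C. adm B C \<and> \<sigma> B / 2 \<le> measure \<mu> C" if "measure \<mu> B \<le> s" for B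
  proof (cases "\<sigma> B \<le> 0")
    case True
    have "adm B {}" using that unfolding adm_def by simp
    thus ?thesis using True by (intro exI[of _ "{}"]) simp
  next
    case False
    have "adm B {}" using that unfolding adm_def by simp
    hence ne: "measure \<mu> ` {C. adm B C} \<noteq> {}" by blast
    have "\<sigma> B / 2 < \<sigma> B" using False by simp
    then obtain C where "adm B C" "\<sigma> B / 2 < measure \<mu> C"
      unfolding \<sigma>_def using less_cSup_iff[OF ne bdd] by auto
    thus ?thesis by (intro exI[of _ C]) auto
  qed
  define Cf where "Cf B = (SOME C. adm B C \<and> \<sigma> B / 2 \<le> measure \<mu> C)" for B
  define Bs where "Bs n = ((\<lambda>B. B \<union> Cf B) ^^ n) {}" for n
  have BsS: "Bs (Suc n) = Bs n \<union> Cf (Bs n)" for n by (simp add: Bs_def)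
  have inv: "Bs n \<in> sets \<mu> \<and> Bs n \<subseteq> A \<and> measure \<mu> (Bs n) \<le> s" for n
  proof (induction n)
    case 0 then show ?case using s by (simp add: Bs_def)
  next
    case (Suc n)
    have "adm (Bs n) (Cf (Bs n))" using someI_ex[OF choose[of "Bs n"]] Suc unfolding Cf_def by blast
    hence c: "Cf (Bs n) \<in> sets \<mu>" "Cf (Bs n) \<subseteq> A - Bs n" "measure \<mu> (Bs n) + measure \<mu> (Cf (Bs n)) \<le> s"
      unfolding adm_def by auto
    have "measure \<mu> (Bs n \<union> Cf (Bs n)) = measure \<mu> (Bs n) + measure \<mu> (Cf (Bs n))"
      using c Suc by (intro finite_measure_Union) auto
    thus ?case using Suc c unfolding BsS by auto
  qed
  have Cprop: "adm (Bs n) (Cf (Bs n)) \<and> \<sigma> (Bs n) / 2 \<le> measure \<mu> (Cf (Bs n))" for n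
    using someI_ex[OF choose[of "Bs n"]] inv unfolding Cf_def by blast
  have madd: "measure \<mu> (Bs (Suc n)) = measure \<mu> (Bs n) + measure \<mu> (Cf (Bs n))" for n
    using Cprop[of n] inv[of n] unfolding BsS adm_def by (intro finite_measure_Union) auto
  define B where "B = (\<Union>n. Bs n)"
  have inc: "incseq Bs" by (rule incseq_SucI) (auto simp: BsS)
  have lim: "(\<lambda>n. measure \<mu> (Bs n)) \<longlonglongrightarrow> measure \<mu> B"
    unfolding B_def using inv inc by (intro finite_Lim_measure_incseq) auto
  have Bsets: "B \<in> sets \<mu>" unfolding B_def using inv by auto
  have BA: "B \<subseteq> A" unfolding B_def using inv by auto
  have Bles: "measure \<mu> B \<le> s" using inv by (intro LIMSEQ_le_const2[OF lim]) auto
  have limS: "(\<lambda>n. measure \<mu> (Bs (Suc n))) \<longlonglongrightarrow> measure \<mu> B" using lim by (rule LIMSEQ_Suc)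
  have "(\<lambda>n. measure \<mu> (Bs (Suc n)) - measure \<mu> (Bs n)) \<longlonglongrightarrow> measure \<mu> B - measure \<mu> B"
    by (intro tendsto_diff limS lim)
  hence Cz: "(\<lambda>n. measure \<mu> (Cf (Bs n))) \<longlonglongrightarrow> 0" by (simp add: madd)
  have "measure \<mu> B = s"
  proof (rule ccontr)
    assume "measure \<mu> B \<noteq> s"
    hence lt: "measure \<mu> B < s" using Bles by simp
    have "measure \<mu> (A - B) = measure \<mu> A - measure \<mu> B" using finite_measure_Diff A Bsets BA by blast
    hence pos: "measure \<mu> (A - B) > 0" using lt s by simp
    have ABs: "A - B \<in> sets \<mu>" using A Bsets by auto
    have elt: "s - measure \<mu> B > 0" using lt by simp
    obtain D where D: "D \<in> sets \<mu>" "D \<subseteq> A - B" "0 < measure \<mu> D" "measure \<mu> D < s - measure \<mu> B"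
      using natom_small[OF fm na ABs pos elt] by blast
    have "measure \<mu> D / 2 \<le> measure \<mu> (Cf (Bs n))" for n
    proof -
      have mono: "measure \<mu> (Bs n) \<le> measure \<mu> B"
        using Bsets by (intro finite_measure_mono) (auto simp: B_def)
      have "Bs n \<subseteq> B" by (auto simp: B_def)
      hence "adm (Bs n) D" unfolding adm_def using D mono by auto
      hence "measure \<mu> D \<le> \<sigma> (Bs n)" unfolding \<sigma>_def by (intro cSup_upper bdd) auto
      thus ?thesis using Cprop[of n] by simp
    qed
    hence "measure \<mu> D / 2 \<le> 0" by (intro LIMSEQ_le_const[OF Cz]) auto
    thus False using D by simp
  qed
  thus ?thesis using Bsets BA by blast
qed



lemma dep:
  fixes v :: "'b \<Rightarrow> nat \<Rightarrow> real"
  assumes "finite S" "card S > d"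
  shows "\<exists>c. (\<exists>j\<in>S. c j \<noteq> 0) \<and> (\<forall>k<d. (\<Sum>j\<in>S. c j * v j k) = 0)"
  using assms
proof (induction d arbitrary: S v)
  case 0
  then obtain j where "j \<in> S" by fastforce
  thus ?case by (intro exI[of _ "\<lambda>_. 1"]) auto
next
  case (Suc d)
  show ?case
  proof (cases "\<forall>j\<in>S. v j d = 0")
    case True
    obtain c where c: "\<exists>j\<in>S. c j \<noteq> 0" "\<forall>k<d. (\<Sum>j\<in>S. c j * v j k) = 0"
      using Suc.IH[of S v] Suc.prems by auto
    have "\<forall>k<Suc d. (\<Sum>j\<in>S. c j * v j k) = 0"
    proof (intro allI impI)
      fix k assume "k < Suc d"
      then consider "k < d" | "k = d" by linarith
      thus "(\<Sum>j\<in>S. c j * v j k) = 0" using c True by cases auto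
    qed
    thus ?thesis using c by blast
  next
    case False
    then obtain j0 where j0: "j0 \<in> S" "v j0 d \<noteq> 0" by blast
    define S' where "S' = S - {j0}"
    have fS': "finite S'" using Suc.prems by (simp add: S'_def)
    have cS': "card S' > d" using Suc.prems j0 by (simp add: S'_def)
    define w where "w j k = v j k - (v j d / v j0 d) * v j0 k" for j k
    obtain c' where c': "\<exists>j\<in>S'. c' j \<noteq> 0" "\<forall>k<d. (\<Sum>j\<in>S'. c' j * w j k) = 0"
      using Suc.IH[OF fS' cS', of w] by auto
    define a where "a = (\<Sum>j\<in>S'. c' j * v j d) / v j0 d"
    define c where "c j = (if j = j0 then - a else c' j)" for j
    have sumS: "(\<Sum>j\<in>S. c j * v j k) = (\<Sum>j\<in>S'. c' j * v j k) - a * v j0 k" for k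
    proof -
      have "(\<Sum>j\<in>S. c j * v j k) = c j0 * v j0 k + (\<Sum>j\<in>S'. c j * v j k)"
        unfolding S'_def using Suc.prems(1) j0 by (simp add: sum.remove)
      also have "(\<Sum>j\<in>S'. c j * v j k) = (\<Sum>j\<in>S'. c' j * v j k)"
        by (intro sum.cong) (auto simp: c_def S'_def)
      finally show ?thesis by (simp add: c_def)
    qed
    have "\<forall>k<Suc d. (\<Sum>j\<in>S. c j * v j k) = 0"
    proof (intro allI impI)
      fix k assume "k < Suc d"
      then consider "k < d" | "k = d" by linarith
      thus "(\<Sum>j\<in>S. c j * v j k) = 0"
      proof cases
        case 1
        have "0 = (\<Sum>j\<in>S'. c' j * w j k)" using c' 1 by auto
        also have "\<dots> = (\<Sum>j\<in>S'. c' j * v j k) - (\<Sum>j\<in>S'. c' j * v j d) / v j0 d * v j0 k"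
          unfolding w_def by (simp add: algebra_simps sum_subtractf sum_distrib_left sum_distrib_right sum_divide_distrib)
        finally show ?thesis unfolding sumS a_def by simp
      next
        case 2
        then show ?thesis unfolding sumS a_def using j0 by simp
      qed
    qed
    moreover have "\<exists>j\<in>S. c j \<noteq> 0" using c' by (auto simp: c_def S'_def)
    ultimately show ?thesis by blast
  qed
qed



lemma reduce_step:
  fixes v :: "'b \<Rightarrow> nat \<Rightarrow> real" and x :: "'b \<Rightarrow> real"
  assumes J: "finite J" and x01: "\<forall>j\<in>J. 0 \<le> x j \<and> x j \<le> 1"
    and big: "card {j\<in>J. 0 < x j \<and> x j < 1} > d"
  shows "\<exists>y. (\<forall>j\<in>J. 0 \<le> y j \<and> y j \<le> 1) \<and> (\<forall>k<d. (\<Sum>j\<in>J. y j * v j k) = (\<Sum>j\<in>J. x j * v j k))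
     \<and> card {j\<in>J. 0 < y j \<and> y j < 1} < card {j\<in>J. 0 < x j \<and> x j < 1}"
proof -
  define F where "F = {j\<in>J. 0 < x j \<and> x j < 1}"
  have fF: "finite F" using J by (simp add: F_def)
  obtain c where c: "\<exists>j\<in>F. c j \<noteq> 0" "\<forall>k<d. (\<Sum>j\<in>F. c j * v j k) = 0"
    using dep[OF fF big[folded F_def], of v] by blast
  define c0 where "c0 j = (if j \<in> F then c j else 0)" for j
  define Z where "Z = {j\<in>F. c j \<noteq> 0}"
  have fZ: "finite Z" "Z \<noteq> {}" using fF c(1) by (auto simp: Z_def)
  define bd where "bd j = (if c j > 0 then (1 - x j) / c j else x j / (- c j))" for j
  have bdpos: "bd j > 0" if "j \<in> Z" for j
    using that by (auto simp: Z_def F_def bd_def divide_pos_neg)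
  define lam where "lam = Min (bd ` Z)"
  obtain j1 where j1: "j1 \<in> Z" "bd j1 = lam"
  proof -
    have "lam \<in> bd ` Z" unfolding lam_def using fZ by (intro Min_in) auto
    thus ?thesis using that by auto
  qed
  have lamle: "lam \<le> bd j" if "j \<in> Z" for j unfolding lam_def using fZ that by simp
  have lampos: "lam > 0" using bdpos j1 by auto
  define y where "y j = x j + lam * c0 j" for j
  have y01: "0 \<le> y j \<and> y j \<le> 1" if "j \<in> J" for j
  proof (cases "j \<in> Z")
    case False
    hence "c0 j = 0" by (auto simp: c0_def Z_def)
    thus ?thesis using x01 that by (simp add: y_def)
  next
    case True
    hence jF: "j \<in> F" and cne: "c j \<noteq> 0" and xj: "0 < x j" "x j < 1" by (auto simp: Z_def F_def)
    have le: "lam \<le> bd j" using lamle True by blast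
    show ?thesis
    proof (cases "c j > 0")
      case True
      hence "lam * c j \<le> 1 - x j" using le by (simp add: bd_def pos_le_divide_eq)
      moreover have "lam * c j \<ge> 0" using True lampos by simp
      ultimately show ?thesis using xj jF by (simp add: y_def c0_def)
    next
      case False
      hence neg: "c j < 0" using cne by simp
      have e: "bd j = x j / (- c j)" using False by (simp add: bd_def)
      have "lam * (- c j) \<le> (x j / (- c j)) * (- c j)" using le e neg by (intro mult_right_mono) auto
      also have "\<dots> = x j" using neg by simp
      finally have "lam * (- c j) \<le> x j" .
      moreover have "lam * c j \<le> 0" using neg lampos by (simp add: mult_nonneg_nonpos)
      ultimately show ?thesis using xj jF by (simp add: y_def c0_def)
    qed
  qed
  have FJ: "F \<subseteq> J" by (auto simp: F_def)
  have sums: "(\<Sum>j\<in>J. y j * v j k) = (\<Sum>j\<in>J. x j * v j k)" if "k < d" for k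
  proof -
    have "(\<Sum>j\<in>J. c0 j * v j k) = (\<Sum>j\<in>F. c0 j * v j k)"
      using J FJ by (intro sum.mono_neutral_right) (auto simp: c0_def)
    also have "\<dots> = (\<Sum>j\<in>F. c j * v j k)" by (intro sum.cong) (auto simp: c0_def)
    finally have z: "(\<Sum>j\<in>J. c0 j * v j k) = 0" using c(2) that by simp
    have "(\<Sum>j\<in>J. y j * v j k) = (\<Sum>j\<in>J. x j * v j k) + lam * (\<Sum>j\<in>J. c0 j * v j k)"
      by (simp add: y_def algebra_simps sum.distrib sum_distrib_left)
    thus ?thesis using z by simp
  qed
  have sub: "{j\<in>J. 0 < y j \<and> y j < 1} \<subseteq> F - {j1}"
  proof
    fix j assume j: "j \<in> {j\<in>J. 0 < y j \<and> y j < 1}"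
    have "j \<in> F"
    proof (rule ccontr)
      assume "j \<notin> F" hence "y j = x j" by (simp add: y_def c0_def)
      thus False using j x01 \<open>j \<notin> F\<close> by (auto simp: F_def)
    qed
    moreover have "j \<noteq> j1"
    proof
      assume jj: "j = j1"
      have j1F: "j1 \<in> F" "c j1 \<noteq> 0" using j1 by (auto simp: Z_def)
      have "y j1 = 0 \<or> y j1 = 1"
      proof (cases "c j1 > 0")
        case True
        have "lam * c j1 = 1 - x j1" using j1(2) True unfolding bd_def by (auto simp: field_simps)
        thus ?thesis using j1F by (simp add: y_def c0_def)
      next
        case False
        have "lam * c j1 = - x j1" using j1(2) False j1F unfolding bd_def by (auto simp: field_simps)
        thus ?thesis using j1F by (simp add: y_def c0_def)
      qed
      thus False using j jj by auto
    qed
    ultimately show "j \<in> F - {j1}" by simp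
  qed
  have "card {j\<in>J. 0 < y j \<and> y j < 1} \<le> card (F - {j1})" using sub fF by (intro card_mono) auto
  also have "\<dots> < card F" using fF j1 by (intro card_Diff1_less) (auto simp: Z_def)
  finally show ?thesis using y01 sums unfolding F_def by blast
qed

lemma reduce:
  fixes v :: "'b \<Rightarrow> nat \<Rightarrow> real" and x :: "'b \<Rightarrow> real"
  assumes J: "finite J" and x01: "\<forall>j\<in>J. 0 \<le> x j \<and> x j \<le> 1"
  shows "\<exists>y. (\<forall>j\<in>J. 0 \<le> y j \<and> y j \<le> 1) \<and> (\<forall>k<d. (\<Sum>j\<in>J. y j * v j k) = (\<Sum>j\<in>J. x j * v j k))
     \<and> card {j\<in>J. 0 < y j \<and> y j < 1} \<le> d"
  using x01
proof (induction "card {j\<in>J. 0 < x j \<and> x j < 1}" arbitrary: x rule: less_induct)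
  case (less x)
  show ?case
  proof (cases "card {j\<in>J. 0 < x j \<and> x j < 1} \<le> d")
    case True thus ?thesis using less.prems by blast
  next
    case False
    obtain y where y: "\<forall>j\<in>J. 0 \<le> y j \<and> y j \<le> 1" "\<forall>k<d. (\<Sum>j\<in>J. y j * v j k) = (\<Sum>j\<in>J. x j * v j k)"
      "card {j\<in>J. 0 < y j \<and> y j < 1} < card {j\<in>J. 0 < x j \<and> x j < 1}"
      using reduce_step[OF J less.prems, of d v] False by auto
    obtain z where "\<forall>j\<in>J. 0 \<le> z j \<and> z j \<le> 1" "\<forall>k<d. (\<Sum>j\<in>J. z j * v j k) = (\<Sum>j\<in>J. y j * v j k)"
      "card {j\<in>J. 0 < z j \<and> z j < 1} \<le> d"
      using less.hyps[OF y(3) y(1)] by blast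
    thus ?thesis using y(2) by auto
  qed
qed



definition linv :: "'a measure \<Rightarrow> (nat \<Rightarrow> 'a measure) \<Rightarrow> nat \<Rightarrow> 'a set \<Rightarrow> real \<Rightarrow> nat \<Rightarrow>
   'a set \<Rightarrow> nat set \<Rightarrow> (nat \<Rightarrow> 'a set) \<Rightarrow> (nat \<Rightarrow> real) \<Rightarrow> bool" where
  "linv \<mu> \<nu> d E t n G J Q x \<longleftrightarrow> G \<in> sets \<mu> \<and> G \<subseteq> E \<and> finite J \<and> card J \<le> d \<and>
     (\<forall>j\<in>J. Q j \<in> sets \<mu> \<and> Q j \<subseteq> E \<and> Q j \<inter> G = {} \<and> measure \<mu> (Q j) \<le> measure \<mu> E / 2^n
        \<and> 0 \<le> x j \<and> x j \<le> 1) \<and> disjoint_family_on Q J \<and>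
     (\<forall>k<d. measure (\<nu> k) G + (\<Sum>j\<in>J. x j * measure (\<nu> k) (Q j)) = t * measure (\<nu> k) E)"

lemma linv_step:
  assumes fm: "finite_measure \<mu>" and na: "natom \<mu>"
    and fn: "\<forall>k<d. finite_measure (\<nu> k)" and sn: "\<forall>k<d. sets (\<nu> k) = sets \<mu>"
    and inv: "linv \<mu> \<nu> d E t n G J Q x"
  shows "\<exists>G' J' Q' x'. linv \<mu> \<nu> d E t (Suc n) G' J' Q' x' \<and> G \<subseteq> G'"
proof -
  interpret finite_measure \<mu> by fact
  note I = inv[unfolded linv_def]
  have "\<forall>j\<in>J. \<exists>H. H \<in> sets \<mu> \<and> H \<subseteq> Q j \<and> measure \<mu> H = measure \<mu> (Q j) / 2"
  proof
    fix j assume "j \<in> J"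
    hence "Q j \<in> sets \<mu>" using I by blast
    thus "\<exists>H. H \<in> sets \<mu> \<and> H \<subseteq> Q j \<and> measure \<mu> H = measure \<mu> (Q j) / 2"
      using sierpinski[OF fm na, of "Q j" "measure \<mu> (Q j) / 2"] by auto
  qed
  then obtain H where H: "\<And>j. j \<in> J \<Longrightarrow> H j \<in> sets \<mu> \<and> H j \<subseteq> Q j \<and> measure \<mu> (H j) = measure \<mu> (Q j) / 2"
    by metis
  define J2 where "J2 = (\<lambda>j. 2*j) ` J \<union> (\<lambda>j. Suc (2*j)) ` J"
  define R where "R i = (if even i then H (i div 2) else Q (i div 2) - H (i div 2))" for i
  define y where "y i = x (i div 2)" for i
  have fJ: "finite J" using I by blast
  have fJ2: "finite J2" using fJ by (simp add: J2_def)
  have J2J: "i div 2 \<in> J" if "i \<in> J2" for i using that by (auto simp: J2_def)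
  have Rsets: "R i \<in> sets \<mu>" if "i \<in> J2" for i
    using H[OF J2J[OF that]] I J2J[OF that] by (auto simp: R_def)
  have RQ: "R i \<subseteq> Q (i div 2)" if "i \<in> J2" for i
    using H[OF J2J[OF that]] by (auto simp: R_def)
  have Rmu: "measure \<mu> (R i) = measure \<mu> (Q (i div 2)) / 2" if "i \<in> J2" for i
  proof (cases "even i")
    case True thus ?thesis using H[OF J2J[OF that]] by (simp add: R_def)
  next
    case False
    have "measure \<mu> (Q (i div 2) - H (i div 2)) = measure \<mu> (Q (i div 2)) - measure \<mu> (H (i div 2))"
      using H[OF J2J[OF that]] I J2J[OF that] by (intro finite_measure_Diff) auto
    thus ?thesis using False H[OF J2J[OF that]] by (simp add: R_def)
  qed
  have Rdisj: "disjoint_family_on R J2"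
    unfolding disjoint_family_on_def
  proof (intro ballI impI)
    fix i i' assume ii: "i \<in> J2" "i' \<in> J2" "i \<noteq> i'"
    show "R i \<inter> R i' = {}"
    proof (cases "i div 2 = i' div 2")
      case True
      hence "even i \<noteq> even i'" using ii(3)
        by (metis dvd_mult_div_cancel odd_two_times_div_two_succ)
      thus ?thesis using True by (auto simp: R_def)
    next
      case False
      have "Q (i div 2) \<inter> Q (i' div 2) = {}" using I J2J ii False unfolding disjoint_family_on_def by blast
      thus ?thesis using RQ ii by blast
    qed
  qed
  have ysum: "(\<Sum>i\<in>J2. y i * measure (\<nu> k) (R i)) = (\<Sum>j\<in>J. x j * measure (\<nu> k) (Q j))" if k: "k < d" for k
  proof -
    interpret N: finite_measure "\<nu> k" using fn k by blast
    have sk: "sets (\<nu> k) = sets \<mu>" using sn k by blast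
    have disj: "(\<lambda>j. 2*j) ` J \<inter> (\<lambda>j. Suc (2*j)) ` J = {}" by auto presburger
    have inj1: "inj_on (\<lambda>j. 2*j) J" and inj2: "inj_on (\<lambda>j::nat. Suc (2*j)) J" by (auto simp: inj_on_def)
    have "(\<Sum>i\<in>J2. y i * measure (\<nu> k) (R i)) =
        (\<Sum>i\<in>(\<lambda>j. 2*j) ` J. y i * measure (\<nu> k) (R i)) + (\<Sum>i\<in>(\<lambda>j. Suc (2*j)) ` J. y i * measure (\<nu> k) (R i))"
      unfolding J2_def using fJ disj by (intro sum.union_disjoint) auto
    also have "\<dots> = (\<Sum>j\<in>J. x j * measure (\<nu> k) (H j)) + (\<Sum>j\<in>J. x j * measure (\<nu> k) (Q j - H j))"
      by (simp add: sum.reindex[OF inj1] sum.reindex[OF inj2] y_def R_def)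
    also have "\<dots> = (\<Sum>j\<in>J. x j * measure (\<nu> k) (Q j))"
    proof -
      have "x j * measure (\<nu> k) (H j) + x j * measure (\<nu> k) (Q j - H j) = x j * measure (\<nu> k) (Q j)"
        if "j \<in> J" for j
      proof -
        have "measure (\<nu> k) (Q j - H j) = measure (\<nu> k) (Q j) - measure (\<nu> k) (H j)"
          using H[OF that] I that sk by (intro N.finite_measure_Diff) auto
        thus ?thesis by (simp add: distrib_left[symmetric])
      qed
      thus ?thesis by (simp add: sum.distrib[symmetric])
    qed
    finally show ?thesis .
  qed
  have y01: "\<forall>i\<in>J2. 0 \<le> y i \<and> y i \<le> 1" using I J2J by (auto simp: y_def)
  obtain y' where y': "\<forall>i\<in>J2. 0 \<le> y' i \<and> y' i \<le> 1"
    "\<forall>k<d. (\<Sum>i\<in>J2. y' i * measure (\<nu> k) (R i)) = (\<Sum>i\<in>J2. y i * measure (\<nu> k) (R i))"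
    "card {i\<in>J2. 0 < y' i \<and> y' i < 1} \<le> d"
    using reduce[OF fJ2 y01, of d "\<lambda>i k. measure (\<nu> k) (R i)"] by blast
  define I1 where "I1 = {i\<in>J2. y' i = 1}"
  define J' where "J' = {i\<in>J2. 0 < y' i \<and> y' i < 1}"
  define G' where "G' = G \<union> (\<Union>i\<in>I1. R i)"
  have fI1: "finite I1" using fJ2 by (simp add: I1_def)
  have GI: "G \<inter> (\<Union>i\<in>I1. R i) = {}"
  proof -
    have "R i \<inter> G = {}" if "i \<in> J2" for i using RQ[OF that] I J2J[OF that] by blast
    thus ?thesis by (auto simp: I1_def)
  qed
  have G'sets: "G' \<in> sets \<mu>" unfolding G'_def using I Rsets fI1 by (auto simp: I1_def)
  have G'E: "G' \<subseteq> E" unfolding G'_def using I RQ J2J by (force simp: I1_def)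
  have part1: "\<forall>i\<in>J'. R i \<in> sets \<mu> \<and> R i \<subseteq> E \<and> R i \<inter> G' = {} \<and> measure \<mu> (R i) \<le> measure \<mu> E / 2^Suc n
        \<and> 0 \<le> y' i \<and> y' i \<le> 1"
  proof
    fix i assume i: "i \<in> J'"
    hence iJ2: "i \<in> J2" by (simp add: J'_def)
    have "R i \<subseteq> E" using RQ[OF iJ2] I J2J[OF iJ2] by blast
    moreover have "R i \<inter> G' = {}"
    proof -
      have "R i \<inter> G = {}" using RQ[OF iJ2] I J2J[OF iJ2] by blast
      moreover have "R i \<inter> R i' = {}" if "i' \<in> I1" for i'
      proof -
        have "i' \<in> J2" "i' \<noteq> i" using that i by (auto simp: I1_def J'_def)
        thus ?thesis using Rdisj iJ2 unfolding disjoint_family_on_def by blast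
      qed
      ultimately show ?thesis unfolding G'_def by blast
    qed
    moreover have "measure \<mu> (R i) \<le> measure \<mu> E / 2^Suc n"
    proof -
      have "measure \<mu> (Q (i div 2)) \<le> measure \<mu> E / 2^n" using I J2J[OF iJ2] by blast
      hence "measure \<mu> (Q (i div 2)) / 2 \<le> measure \<mu> E / 2^n / 2" by (rule divide_right_mono) simp
      thus ?thesis using Rmu[OF iJ2] by simp
    qed
    ultimately show "R i \<in> sets \<mu> \<and> R i \<subseteq> E \<and> R i \<inter> G' = {} \<and> measure \<mu> (R i) \<le> measure \<mu> E / 2^Suc n
        \<and> 0 \<le> y' i \<and> y' i \<le> 1" using Rsets[OF iJ2] y' iJ2 by blast
  qed
  have disjJ': "disjoint_family_on R J'" using Rdisj by (rule disjoint_family_on_mono[rotated]) (auto simp: J'_def)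
  have sums: "measure (\<nu> k) G' + (\<Sum>i\<in>J'. y' i * measure (\<nu> k) (R i)) = t * measure (\<nu> k) E" if k: "k < d" for k
  proof -
    interpret N: finite_measure "\<nu> k" using fn k by blast
    have sk: "sets (\<nu> k) = sets \<mu>" using sn k by blast
    have U: "measure (\<nu> k) (\<Union>i\<in>I1. R i) = (\<Sum>i\<in>I1. measure (\<nu> k) (R i))"
      using fI1 Rsets sk by (intro N.finite_measure_finite_Union)
        (auto simp: I1_def intro: disjoint_family_on_mono[OF _ Rdisj])
    have "measure (\<nu> k) G' = measure (\<nu> k) G + measure (\<nu> k) (\<Union>i\<in>I1. R i)"
      unfolding G'_def using GI I sk Rsets fI1 by (intro N.finite_measure_Union) (auto simp: I1_def)
    hence m: "measure (\<nu> k) G' = measure (\<nu> k) G + (\<Sum>i\<in>I1. y' i * measure (\<nu> k) (R i))"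
      using U by (simp add: I1_def)
    have "(\<Sum>i\<in>J2. y' i * measure (\<nu> k) (R i)) = (\<Sum>i\<in>I1 \<union> J'. y' i * measure (\<nu> k) (R i))"
    proof (rule sum.mono_neutral_right[OF fJ2])
      show "I1 \<union> J' \<subseteq> J2" by (auto simp: I1_def J'_def)
      show "\<forall>i\<in>J2 - (I1 \<union> J'). y' i * measure (\<nu> k) (R i) = 0"
      proof
        fix i assume "i \<in> J2 - (I1 \<union> J')"
        hence "y' i = 0" using y'(1) by (force simp: I1_def J'_def)
        thus "y' i * measure (\<nu> k) (R i) = 0" by simp
      qed
    qed
    also have "\<dots> = (\<Sum>i\<in>I1. y' i * measure (\<nu> k) (R i)) + (\<Sum>i\<in>J'. y' i * measure (\<nu> k) (R i))"
      using fJ2 by (intro sum.union_disjoint) (auto simp: I1_def J'_def)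
    finally have "(\<Sum>i\<in>J2. y' i * measure (\<nu> k) (R i)) =
       (\<Sum>i\<in>I1. y' i * measure (\<nu> k) (R i)) + (\<Sum>i\<in>J'. y' i * measure (\<nu> k) (R i))" .
    moreover have "(\<Sum>i\<in>J2. y' i * measure (\<nu> k) (R i)) = (\<Sum>j\<in>J. x j * measure (\<nu> k) (Q j))"
      using y'(2) ysum k by simp
    moreover have "measure (\<nu> k) G + (\<Sum>j\<in>J. x j * measure (\<nu> k) (Q j)) = t * measure (\<nu> k) E"
      using I k by blast
    ultimately show ?thesis using m by linarith
  qed
  have "linv \<mu> \<nu> d E t (Suc n) G' J' R y'"
    unfolding linv_def using G'sets G'E part1 disjJ' sums y'(3) fJ2
    by (simp add: J'_def)
  moreover have "G \<subseteq> G'" by (simp add: G'_def)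
  ultimately show ?thesis by blast
qed



lemma lyap:
  fixes \<mu> :: "'a measure" and \<nu> :: "nat \<Rightarrow> 'a measure"
  assumes fm: "finite_measure \<mu>" and na: "natom \<mu>"
    and fn: "\<forall>k<d. finite_measure (\<nu> k)" and sn: "\<forall>k<d. sets (\<nu> k) = sets \<mu>"
    and le: "\<forall>k<d. \<forall>A\<in>sets \<mu>. measure (\<nu> k) A \<le> measure \<mu> A"
    and d: "d \<ge> 1" and E: "E \<in> sets \<mu>" and t: "0 \<le> t" "t \<le> 1"
  shows "\<exists>F\<in>sets \<mu>. F \<subseteq> E \<and> (\<forall>k<d. measure (\<nu> k) F = t * measure (\<nu> k) E)"
proof -
  interpret finite_measure \<mu> by fact
  let ?P = "\<lambda>n s. linv \<mu> \<nu> d E t n (fst s) (fst (snd s)) (fst (snd (snd s))) (snd (snd (snd s)))"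
  have step: "\<exists>s'. ?P (Suc n) s' \<and> fst s \<subseteq> fst s'" if Pn: "?P n s" for n s
  proof -
    obtain G' J' Q' x' where "linv \<mu> \<nu> d E t (Suc n) G' J' Q' x'" "fst s \<subseteq> G'"
      using linv_step[OF fm na fn sn Pn] by blast
    thus ?thesis by (intro exI[of _ "(G', J', Q', x')"]) simp
  qed
  define s0 where "s0 = ({} :: 'a set, {0::nat}, (\<lambda>_::nat. E), (\<lambda>_::nat. t))"
  have P0: "?P 0 s0" unfolding s0_def linv_def using E t d by (simp add: disjoint_family_on_def)
  define st where "st = rec_nat s0 (\<lambda>n s. SOME s'. ?P (Suc n) s' \<and> fst s \<subseteq> fst s')"
  have st0: "st 0 = s0" by (simp add: st_def)
  have stS: "st (Suc n) = (SOME s'. ?P (Suc n) s' \<and> fst (st n) \<subseteq> fst s')" for n by (simp add: st_def)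
  have Pst: "?P n (st n)" for n
  proof (induction n)
    case 0 then show ?case using P0 st0 by simp
  next
    case (Suc n) show ?case unfolding stS using someI_ex[OF step[OF Suc]] by blast
  qed
  have incS: "fst (st n) \<subseteq> fst (st (Suc n))" for n unfolding stS using someI_ex[OF step[OF Pst[of n]]] by blast
  define Gs where "Gs n = fst (st n)" for n
  have inc: "incseq Gs" unfolding Gs_def by (rule incseq_SucI) (rule incS)
  have Gsets: "Gs n \<in> sets \<mu>" and GE: "Gs n \<subseteq> E" for n using Pst[of n] by (auto simp: linv_def Gs_def)
  define G where "G = (\<Union>n. Gs n)"
  have Gs: "G \<in> sets \<mu>" "G \<subseteq> E" using Gsets GE by (auto simp: G_def)
  have "measure (\<nu> k) G = t * measure (\<nu> k) E" if k: "k < d" for k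
  proof -
    interpret N: finite_measure "\<nu> k" using fn k by blast
    have sk: "sets (\<nu> k) = sets \<mu>" using sn k by blast
    have lim1: "(\<lambda>n. measure (\<nu> k) (Gs n)) \<longlonglongrightarrow> measure (\<nu> k) G"
      unfolding G_def using Gsets sk inc by (intro N.finite_Lim_measure_incseq) auto
    have bound: "norm (t * measure (\<nu> k) E - measure (\<nu> k) (Gs n)) \<le> (real d * measure \<mu> E) * (1/2)^n" for n
    proof -
      define J where "J = fst (snd (st n))"
      define Q where "Q = fst (snd (snd (st n)))"
      define x where "x = snd (snd (snd (st n)))"
      have L: "linv \<mu> \<nu> d E t n (Gs n) J Q x" using Pst[of n] by (simp add: Gs_def J_def Q_def x_def)
      have Lc: "card J \<le> d" and LJ: "\<forall>j\<in>J. Q j \<in> sets \<mu> \<and> Q j \<subseteq> E \<and> Q j \<inter> Gs n = {} \<and> measure \<mu> (Q j) \<le> measure \<mu> E / 2^n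
        \<and> 0 \<le> x j \<and> x j \<le> 1"
        and Ls: "\<forall>k<d. measure (\<nu> k) (Gs n) + (\<Sum>j\<in>J. x j * measure (\<nu> k) (Q j)) = t * measure (\<nu> k) E"
        using L unfolding linv_def by blast+
      have "measure (\<nu> k) (Gs n) + (\<Sum>j\<in>J. x j * measure (\<nu> k) (Q j)) = t * measure (\<nu> k) E"
        using Ls k by blast
      hence eq: "t * measure (\<nu> k) E - measure (\<nu> k) (Gs n) = (\<Sum>j\<in>J. x j * measure (\<nu> k) (Q j))"
        by linarith
      have nn: "0 \<le> (\<Sum>j\<in>J. x j * measure (\<nu> k) (Q j))"
      proof (rule sum_nonneg)
        fix j assume "j \<in> J" hence "0 \<le> x j" using LJ by blast
        thus "0 \<le> x j * measure (\<nu> k) (Q j)" by simp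
      qed
      have "(\<Sum>j\<in>J. x j * measure (\<nu> k) (Q j)) \<le> (\<Sum>j\<in>J. measure \<mu> E / 2^n)"
      proof (rule sum_mono)
        fix j assume j: "j \<in> J"
        have Qj: "Q j \<in> sets \<mu>" "x j \<le> 1" "measure \<mu> (Q j) \<le> measure \<mu> E / 2^n" using LJ j by blast+
        have "x j * measure (\<nu> k) (Q j) \<le> 1 * measure (\<nu> k) (Q j)"
          using Qj(2) by (intro mult_right_mono) auto
        also have "\<dots> \<le> measure \<mu> (Q j)" using le k Qj(1) by simp
        also have "\<dots> \<le> measure \<mu> E / 2^n" by (rule Qj(3))
        finally show "x j * measure (\<nu> k) (Q j) \<le> measure \<mu> E / 2^n" .
      qed
      also have "\<dots> = real (card J) * (measure \<mu> E / 2^n)" by simp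
      also have "\<dots> \<le> real d * (measure \<mu> E / 2^n)"
        using Lc by (intro mult_right_mono) auto
      also have "\<dots> = (real d * measure \<mu> E) * (1/2)^n" by (simp add: power_one_over)
      finally show ?thesis using eq nn by simp
    qed
    have "(\<lambda>n. (real d * measure \<mu> E) * (1/2::real)^n) \<longlonglongrightarrow> 0"
      by (intro tendsto_mult_right_zero LIMSEQ_realpow_zero) auto
    hence "(\<lambda>n. t * measure (\<nu> k) E - measure (\<nu> k) (Gs n)) \<longlonglongrightarrow> 0"
      by (rule Lim_null_comparison[rotated]) (use bound in auto)
    hence "(\<lambda>n. t * measure (\<nu> k) E - (t * measure (\<nu> k) E - measure (\<nu> k) (Gs n))) \<longlonglongrightarrow> t * measure (\<nu> k) E - 0"
      by (intro tendsto_diff tendsto_const)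
    hence lim2: "(\<lambda>n. measure (\<nu> k) (Gs n)) \<longlonglongrightarrow> t * measure (\<nu> k) E" by simp
    show ?thesis using LIMSEQ_unique[OF lim1 lim2] .
  qed
  thus ?thesis using Gs by blast
qed



lemma charge_add:
  assumes ch: "is_charge M f" and AB: "A \<in> sets M" "B \<in> sets M" "A \<inter> B = {}"
  shows "f (A \<union> B) = f A + f B"
proof -
  define X where "X n = (if n = 0 then A else if n = 1 then B else {})" for n :: nat
  have r: "range X \<subseteq> sets M" using AB by (auto simp: X_def)
  have dj: "disjoint_family X" using AB unfolding disjoint_family_on_def X_def by auto
  have U: "(\<Union>n. X n) = A \<union> B" by (auto simp: X_def split: if_splits)
  have s1: "(\<lambda>n. f (X n)) sums f (A \<union> B)" using ch r dj U unfolding is_charge_def by metis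
  have s2: "(\<lambda>n. f (X n)) sums (\<Sum>n\<in>{0,1}. f (X n))"
    by (rule sums_finite) (auto simp: X_def charge_empty[OF ch])
  have "(\<Sum>n\<in>{0::nat,1}. f (X n)) = f A + f B" by (simp add: X_def)
  thus ?thesis using sums_unique2[OF s1 s2] by simp
qed

lemma charge_restrict:
  assumes ch: "is_charge M f" and S: "S \<in> sets M"
  shows "is_charge M (\<lambda>A. f (A \<inter> S))"
  unfolding is_charge_def
proof (intro allI impI)
  fix A :: "nat \<Rightarrow> 'a set" assume A: "range A \<subseteq> sets M" "disjoint_family A"
  have "range (\<lambda>n. A n \<inter> S) \<subseteq> sets M" using A S by auto
  moreover have "disjoint_family (\<lambda>n. A n \<inter> S)" using A(2) unfolding disjoint_family_on_def by auto
  ultimately have "(\<lambda>n. f (A n \<inter> S)) sums f (\<Union>n. A n \<inter> S)" using ch unfolding is_charge_def by blast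
  moreover have "(\<Union>n. A n \<inter> S) = (\<Union>n. A n) \<inter> S" by auto
  ultimately show "(\<lambda>n. f (A n \<inter> S)) sums f ((\<Union>n. A n) \<inter> S)" by simp
qed

lemma charge_neg:
  assumes ch: "is_charge M f" shows "is_charge M (\<lambda>A. - f A)"
  using ch unfolding is_charge_def by (auto intro: sums_minus)

lemma charge_sum:
  fixes M :: "'a measure" and f :: "'i \<Rightarrow> 'a set \<Rightarrow> real"
  assumes "\<And>i. i \<in> I \<Longrightarrow> is_charge M (f i)"
  shows "is_charge M (\<lambda>A. \<Sum>i\<in>I. f i A)"
  unfolding is_charge_def
proof (intro allI impI)
  fix A :: "nat \<Rightarrow> 'a set" assume A: "range A \<subseteq> sets M" "disjoint_family A"
  have "\<And>i. i \<in> I \<Longrightarrow> (\<lambda>n. f i (A n)) sums f i (\<Union>n. A n)" using assms A unfolding is_charge_def by blast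
  thus "(\<lambda>n. \<Sum>i\<in>I. f i (A n)) sums (\<Sum>i\<in>I. f i (\<Union>n. A n))" by (rule sums_sum)
qed

lemma divide_exact:
  fixes \<mu> :: "'a measure" and \<nu> :: "nat \<Rightarrow> 'a measure" and m :: nat
  assumes fm: "finite_measure \<mu>" and na: "natom \<mu>"
    and fn: "\<forall>k<d. finite_measure (\<nu> k)" and sn: "\<forall>k<d. sets (\<nu> k) = sets \<mu>"
    and le: "\<forall>k<d. \<forall>A\<in>sets \<mu>. measure (\<nu> k) A \<le> measure \<mu> A"
    and d: "d \<ge> 1"
  shows "m > 0 \<Longrightarrow> E \<in> sets \<mu> \<Longrightarrow> \<exists>F. (\<forall>j<m. F j \<in> sets \<mu>) \<and> (\<forall>j<m. \<forall>j'<m. j \<noteq> j' \<longrightarrow> F j \<inter> F j' = {})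
     \<and> (\<Union>j<m. F j) = E \<and> (\<forall>k<d. \<forall>j<m. measure (\<nu> k) (F j) = measure (\<nu> k) E / real m)"
proof (induction m arbitrary: E rule: nat_induct_non_zero)
  case 1
  show ?case by (intro exI[of _ "\<lambda>_. E"]) (use 1 in auto)
next
  case (Suc m)
  have t: "0 \<le> 1 / real (Suc m)" "1 / real (Suc m) \<le> 1" by auto
  obtain S where S: "S \<in> sets \<mu>" "S \<subseteq> E" "\<forall>k<d. measure (\<nu> k) S = 1 / real (Suc m) * measure (\<nu> k) E"
    using lyap[OF fm na fn sn le d Suc.prems t] by blast
  have ES: "E - S \<in> sets \<mu>" using S Suc.prems by auto
  obtain F' where F': "\<forall>j<m. F' j \<in> sets \<mu>" "\<forall>j<m. \<forall>j'<m. j \<noteq> j' \<longrightarrow> F' j \<inter> F' j' = {}"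
     "(\<Union>j<m. F' j) = E - S" "\<forall>k<d. \<forall>j<m. measure (\<nu> k) (F' j) = measure (\<nu> k) (E - S) / m"
    using Suc.IH[OF ES] by blast
  define F where "F = F'(m := S)"
  have FS: "\<forall>j<Suc m. F j \<in> sets \<mu>" using F' S by (auto simp: F_def less_Suc_eq)
  have F'sub: "F' j \<subseteq> E - S" if "j < m" for j using F'(3) that by blast
  have FD: "\<forall>j<Suc m. \<forall>j'<Suc m. j \<noteq> j' \<longrightarrow> F j \<inter> F j' = {}"
  proof (intro allI impI)
    fix j j' assume jj: "j < Suc m" "j' < Suc m" "j \<noteq> j'"
    show "F j \<inter> F j' = {}"
    proof (cases "j = m")
      case True thus ?thesis using jj F'sub[of j'] by (auto simp: F_def)
    next
      case False
      show ?thesis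
      proof (cases "j' = m")
        case True thus ?thesis using jj F'sub[of j] False by (auto simp: F_def)
      next
        case False2: False
        thus ?thesis using jj False F'(2) by (auto simp: F_def)
      qed
    qed
  qed
  have FU: "(\<Union>j<Suc m. F j) = E"
  proof -
    have "(\<Union>j<Suc m. F j) = F m \<union> (\<Union>j<m. F j)" by (simp add: lessThan_Suc)
    also have "(\<Union>j<m. F j) = (\<Union>j<m. F' j)" by (auto simp: F_def)
    finally show ?thesis using F'(3) S by (auto simp: F_def)
  qed
  have FM: "\<forall>k<d. \<forall>j<Suc m. measure (\<nu> k) (F j) = measure (\<nu> k) E / real (Suc m)"
  proof (intro allI impI)
    fix k j assume k: "k < d" and j: "j < Suc m"
    interpret N: finite_measure "\<nu> k" using fn k by blast
    have sk: "sets (\<nu> k) = sets \<mu>" using sn k by blast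
    show "measure (\<nu> k) (F j) = measure (\<nu> k) E / real (Suc m)"
    proof (cases "j = m")
      case True thus ?thesis using S k by (simp add: F_def)
    next
      case False
      hence jm: "j < m" using j by simp
      have "measure (\<nu> k) (E - S) = measure (\<nu> k) E - measure (\<nu> k) S"
        using S Suc.prems sk by (intro N.finite_measure_Diff) auto
      hence "measure (\<nu> k) (F j) = (measure (\<nu> k) E - measure (\<nu> k) E / real (Suc m)) / real m"
        using F'(4) k jm S(3) False by (simp add: F_def)
      also have "\<dots> = measure (\<nu> k) E / real (Suc m)"
      proof -
        define a where "a = measure (\<nu> k) E"
        have m0: "real m \<noteq> 0" using Suc.hyps by simp
        have m1: "real (Suc m) \<noteq> 0" by simp
        have "a - a / real (Suc m) = a * real m / real (Suc m)"
          using m1 by (simp add: field_simps)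
        hence "(a - a / real (Suc m)) / real m = a / real (Suc m)"
          using m0 m1 by simp
        thus ?thesis by (simp add: a_def)
      qed
      finally show ?thesis .
    qed
  qed
  show ?case using FS FD FU FM by blast
qed



theorem theorem1:
  fixes M :: "'a measure" and r :: nat and \<psi> :: "nat \<Rightarrow> 'a set \<Rightarrow> real"
  assumes "r \<ge> 1"
    and "\<And>i. i < r \<Longrightarrow> is_charge M (\<psi> i)"
    and "\<And>i. i < r \<Longrightarrow> nonatomic_charge M (\<psi> i)"
  shows "\<exists>F :: nat \<Rightarrow> 'a set.
           (\<forall>i<r. F i \<in> sets M) \<and>
           (\<forall>i<r. \<forall>j<r. i \<noteq> j \<longrightarrow> F i \<inter> F j = {}) \<and>
           (\<Union>i<r. F i) = space M \<and>
           (\<forall>i<r. \<forall>j<r. \<psi> i (F i) \<ge> \<psi> i (F j))"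
proof -
  have "\<forall>i. \<exists>P. i < r \<longrightarrow> hahn_decomposition M (\<psi> i) P \<and> nonatomic_measure M (\<lambda>E. \<psi> i (E \<inter> P)) \<and>
      nonatomic_measure M (\<lambda>E. - \<psi> i (E \<inter> (space M - P)))"
    using assms(3) unfolding nonatomic_charge_def by blast
  then obtain P where P: "\<And>i. i < r \<Longrightarrow> hahn_decomposition M (\<psi> i) (P i) \<and> nonatomic_measure M (\<lambda>E. \<psi> i (E \<inter> P i)) \<and>
      nonatomic_measure M (\<lambda>E. - \<psi> i (E \<inter> (space M - P i)))" by metis
  have Ps: "P i \<in> sets M" if "i < r" for i using P[OF that] unfolding hahn_decomposition_def by blast
  define d where "d = 2 * r"
  have d1: "d \<ge> 1" using assms(1) by (simp add: d_def)
  define f where "f k = (if even k then (\<lambda>A. \<psi> (k div 2) (A \<inter> P (k div 2)))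
     else (\<lambda>A. - \<psi> (k div 2) (A \<inter> (space M - P (k div 2)))))" for k
  have kr: "k div 2 < r" if "k < d" for k using that by (simp add: d_def)
  have fch: "is_charge M (f k)" if k: "k < d" for k
  proof (cases "even k")
    case True thus ?thesis using charge_restrict[OF assms(2)[OF kr[OF k]] Ps[OF kr[OF k]]] by (simp add: f_def)
  next
    case False
    have "space M - P (k div 2) \<in> sets M" using Ps[OF kr[OF k]] by auto
    thus ?thesis using False charge_neg[OF charge_restrict[OF assms(2)[OF kr[OF k]]]] by (simp add: f_def)
  qed
  have fnn: "0 \<le> f k A" if k: "k < d" and A: "A \<in> sets M" for k A
  proof -
    have H: "hahn_decomposition M (\<psi> (k div 2)) (P (k div 2))" using P kr[OF k] by blast
    show ?thesis
    proof (cases "even k")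
      case True
      have "A \<inter> P (k div 2) \<in> sets M" using A Ps[OF kr[OF k]] by auto
      thus ?thesis using H True unfolding hahn_decomposition_def f_def by auto
    next
      case False
      have "A \<inter> (space M - P (k div 2)) \<in> sets M" using A Ps[OF kr[OF k]] by auto
      moreover have "A \<inter> (space M - P (k div 2)) \<subseteq> space M - P (k div 2)" by auto
      ultimately have "\<psi> (k div 2) (A \<inter> (space M - P (k div 2))) \<le> 0"
        using H unfolding hahn_decomposition_def by blast
      thus ?thesis using False unfolding f_def by simp
    qed
  qed
  have fna: "nonatomic_measure M (f k)" if k: "k < d" for k
  proof (cases "even k")
    case True thus ?thesis using P[OF kr[OF k]] by (simp add: f_def)
  next
    case False thus ?thesis using P[OF kr[OF k]] by (simp add: f_def)
  qed
  define \<nu> where "\<nu> k = measure_of (space M) (sets M) (\<lambda>A. ennreal (f k A))" for k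
  have \<nu>: "sets (\<nu> k) = sets M \<and> finite_measure (\<nu> k) \<and> (\<forall>A\<in>sets M. measure (\<nu> k) A = f k A)" if k: "k < d" for k
    using charge_measure[OF fch[OF k], of] fnn[OF k] unfolding \<nu>_def by blast
  define g where "g A = (\<Sum>k<d. f k A)" for A
  have gch: "is_charge M g" unfolding g_def by (rule charge_sum) (rule fch, simp)
  have gnn: "\<forall>A\<in>sets M. 0 \<le> g A" unfolding g_def using fnn by (auto intro: sum_nonneg)
  define \<mu> where "\<mu> = measure_of (space M) (sets M) (\<lambda>A. ennreal (g A))"
  have \<mu>: "sets \<mu> = sets M" "finite_measure \<mu>" "\<forall>A\<in>sets M. measure \<mu> A = g A"
    using charge_measure[OF gch gnn] unfolding \<mu>_def by blast+
  have fadd: "f k A = f k B + f k (A - B)" if k: "k < d" and AB: "A \<in> sets M" "B \<in> sets M" "B \<subseteq> A" for k A B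
  proof -
    have "f k (B \<union> (A - B)) = f k B + f k (A - B)" using AB by (intro charge_add[OF fch[OF k]]) auto
    moreover have "B \<union> (A - B) = A" using AB by auto
    ultimately show ?thesis by simp
  qed
  have gadd: "g A = g B + g (A - B)" if AB: "A \<in> sets M" "B \<in> sets M" "B \<subseteq> A" for A B
  proof -
    have "g (B \<union> (A - B)) = g B + g (A - B)" using AB by (intro charge_add[OF gch]) auto
    moreover have "B \<union> (A - B) = A" using AB by auto
    ultimately show ?thesis by simp
  qed
  have fleg: "f k A \<le> g A" if k: "k < d" and A: "A \<in> sets M" for k A
    unfolding g_def using k A fnn by (intro member_le_sum) auto
  have na: "natom \<mu>" unfolding natom_def
  proof (intro ballI impI)
    fix A assume A: "A \<in> sets \<mu>" "measure \<mu> A > 0"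
    have AM: "A \<in> sets M" using A \<mu> by simp
    have gA: "g A > 0" using A AM \<mu> by simp
    obtain k where k: "k < d" "f k A > 0"
    proof (rule ccontr)
      assume "\<not> thesis"
      hence "\<forall>k<d. f k A \<le> 0" using that by force
      hence "g A \<le> 0" unfolding g_def by (intro sum_nonpos) auto
      thus False using gA by simp
    qed
    have "\<not> is_atom M (f k) A" using fna[OF k(1)] unfolding nonatomic_measure_def by blast
    then obtain B where B: "B \<in> sets M" "B \<subseteq> A" "f k B \<noteq> 0" "f k B \<noteq> f k A"
      using AM k unfolding is_atom_def by blast
    have e: "f k A = f k B + f k (A - B)" using fadd[OF k(1) AM B(1) B(2)] .
    have ABs: "A - B \<in> sets M" using AM B by auto
    have p1: "f k B > 0" using fnn[OF k(1) B(1)] B(3) by simp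
    have p2: "f k (A - B) > 0" using fnn[OF k(1) ABs] B(4) e by simp
    have "g B > 0" using fleg[OF k(1) B(1)] p1 by simp
    moreover have "g B < g A" using gadd[OF AM B(1) B(2)] fleg[OF k(1) ABs] p2 by simp
    ultimately show "\<exists>B\<in>sets \<mu>. B \<subseteq> A \<and> 0 < measure \<mu> B \<and> measure \<mu> B < measure \<mu> A"
      using B \<mu> AM by (intro bexI[of _ B]) auto
  qed
  have fn: "\<forall>k<d. finite_measure (\<nu> k)" using \<nu> by blast
  have sn: "\<forall>k<d. sets (\<nu> k) = sets \<mu>" using \<nu> \<mu> by simp
  have le: "\<forall>k<d. \<forall>A\<in>sets \<mu>. measure (\<nu> k) A \<le> measure \<mu> A"
    using \<nu> \<mu> fleg by simp
  have r0: "r > 0" using assms(1) by simp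
  have sp: "space M \<in> sets \<mu>" using \<mu> by simp
  obtain F where F: "\<forall>j<r. F j \<in> sets \<mu>" "\<forall>j<r. \<forall>j'<r. j \<noteq> j' \<longrightarrow> F j \<inter> F j' = {}"
     "(\<Union>j<r. F j) = space M" "\<forall>k<d. \<forall>j<r. measure (\<nu> k) (F j) = measure (\<nu> k) (space M) / real r"
    using divide_exact[OF \<mu>(2) na fn sn le d1 r0 sp] by blast
  have FM: "F j \<in> sets M" if "j < r" for j using F(1) \<mu> that by simp
  have psi: "\<psi> i (F j) = (measure (\<nu> (2*i)) (space M) - measure (\<nu> (Suc (2*i))) (space M)) / real r"
    if i: "i < r" and j: "j < r" for i j
  proof -
    have k1: "2*i < d" and k2: "Suc (2*i) < d" using i by (auto simp: d_def)
    have sub: "F j \<subseteq> space M" using FM[OF j] sets.sets_into_space by blast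
    have "\<psi> i ((F j \<inter> P i) \<union> (F j \<inter> (space M - P i))) = \<psi> i (F j \<inter> P i) + \<psi> i (F j \<inter> (space M - P i))"
      using FM[OF j] Ps[OF i] by (intro charge_add[OF assms(2)[OF i]]) auto
    moreover have "(F j \<inter> P i) \<union> (F j \<inter> (space M - P i)) = F j" using sub by auto
    ultimately have "\<psi> i (F j) = f (2*i) (F j) - f (Suc (2*i)) (F j)" by (simp add: f_def)
    also have "\<dots> = measure (\<nu> (2*i)) (F j) - measure (\<nu> (Suc (2*i))) (F j)"
      using \<nu>[OF k1] \<nu>[OF k2] FM[OF j] by simp
    also have "\<dots> = (measure (\<nu> (2*i)) (space M) - measure (\<nu> (Suc (2*i))) (space M)) / real r"
      using F(4) k1 k2 j by (simp add: diff_divide_distrib)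
    finally show ?thesis .
  qed
  show ?thesis
    using FM F(2) F(3) psi by (intro exI[of _ F]) auto
qed

end
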